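(* In the setting described in the context, if conditions (E), (M) and (T) hold, then $\frac{\sup_\Omega X}{\log\epsilon_N^{-1}}\to\gamma_*$ in probability under $\mathbb P_N$ as $N\to\infty$.
   Context: $\Omega\subset\mathbb R^d$ is a bounded, simply connected open set with smooth boundary; $|\cdot|$ is Lebesgue measure; $\gamma_*=\sqrt{2d}$. For each $N$, $\mathbb P_N$ (expectation $\mathbb E_N$) is a probability measure under which the canonical process $X$ is a random function on $\Omega$ that is integrable, bounded above, upper semicontinuous, and approximates a Gaussian log-correlated field on $\Omega$ (for each $f\in C_c^\infty(\Omega)$ the law of $\int fX$ converges to that of the Gaussian field with covariance $\log|x-y|^{-1}+g(x,y)$, $g$ continuous, bounded above, $L^2$). For $\gamma>0$, $\mu_N^\gamma(dx)=\frac{e^{\gamma X(x)}}{\mathbb E_N[e^{\gamma X(x)}]}dx$; $\mathscr T_N^\alpha=\{x\in\Omega:X(x)\ge\alpha\log\epsilon_N^{-1}\}$. Condition (E): there is $\epsilon_N>0$, $\epsilon_N\to0$, such that for every $\gamma>0$ there is $R_\gamma$ with $\mathbb E_N[e^{\gamma X(x)}]\le R_\gamma\epsilon_N^{-\gamma^2/2}$ for all $x\in\Omega$, and for every compact $A\subset\Omega$ a $C_{\gamma,A}$ with $\mathbb E_N[e^{\gamma X(x)}]\ge C_{\gamma,A}^{-1}\epsilon_N^{-\gamma^2/2}$ on $A$. Condition (M): for any $\gamma<\gamma_*$ and Borel $A\subseteq\Omega$ with $|A|>0$, $\mu_N^\gamma(A)$ converges in distribution to $\zeta_A^\gamma$ with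 $\mathbb P[0<\zeta_A^\gamma<\infty]=1$. Condition (T): for any $\alpha>\gamma_*$, $\mathbb P_N[\mathscr T_N^\alpha\ne\emptyset]\to0$. *)

theory Defs
  imports "HOL-Analysis.Analysis" "HOL-Probability.Probability"
begin

text \<open>C-infinity on an open set: every iterated partial derivative exists
  (the family F is closed under taking partial derivatives along the basis).\<close>
definition smooth_on :: "('a::euclidean_space \<Rightarrow> real) \<Rightarrow> 'a set \<Rightarrow> bool" where
  "smooth_on f U \<longleftrightarrow>
     (\<exists>F. f \<in> F \<and> (\<forall>g\<in>F. g differentiable_on U \<and>
        (\<forall>i\<in>Basis. (\<lambda>x. frechet_derivative g (at x) i) \<in> F)))"

definition smooth_boundary :: "'a::euclidean_space set \<Rightarrow> bool" where
  "smooth_boundary \<Omega> \<longleftrightarrow>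
     (\<forall>p\<in>frontier \<Omega>. \<exists>r>0. \<exists>\<phi>. smooth_on \<phi> (ball p r) \<and>
        frechet_derivative \<phi> (at p) \<noteq> (\<lambda>v. 0) \<and>
        \<Omega> \<inter> ball p r = {x\<in>ball p r. \<phi> x < 0})"

definition upper_semicontinuous_on :: "'a::topological_space set \<Rightarrow> ('a \<Rightarrow> real) \<Rightarrow> bool" where
  "upper_semicontinuous_on S f \<longleftrightarrow> (\<forall>t. openin (top_of_set S) {x\<in>S. f x < t})"

definition gaussian_law :: "real \<Rightarrow> real measure" where
  "gaussian_law v = (if v = 0 then return borel 0 else density lborel (normal_density 0 (sqrt v)))"

definition gmc :: "(nat \<Rightarrow> 'w measure) \<Rightarrow> (nat \<Rightarrow> 'w \<Rightarrow> 'a::euclidean_space \<Rightarrow> real)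
    \<Rightarrow> nat \<Rightarrow> real \<Rightarrow> 'a set \<Rightarrow> 'w \<Rightarrow> real" where
  "gmc M X N \<gamma> A \<omega> =
     (LINT x:A|lborel. exp (\<gamma> * X N \<omega> x) / (\<integral>\<omega>'. exp (\<gamma> * X N \<omega>' x) \<partial>M N))"

definition thick_points :: "(nat \<Rightarrow> 'w \<Rightarrow> 'a \<Rightarrow> real) \<Rightarrow> (nat \<Rightarrow> real) \<Rightarrow> 'a set
    \<Rightarrow> nat \<Rightarrow> real \<Rightarrow> 'w \<Rightarrow> 'a set" where
  "thick_points X \<epsilon> \<Omega> N \<alpha> \<omega> = {x\<in>\<Omega>. X N \<omega> x \<ge> \<alpha> * ln (1 / \<epsilon> N)}"

text \<open>(Outer) probability of the events E N tends to 0: they are covered by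
  measurable events whose probabilities tend to 0 (equivalent to
  P_N(E N) -> 0 when the events are measurable).\<close>
definition outer_prob_to_zero :: "(nat \<Rightarrow> 'w measure) \<Rightarrow> (nat \<Rightarrow> 'w set) \<Rightarrow> bool" where
  "outer_prob_to_zero M E \<longleftrightarrow>
     (\<exists>B. (\<forall>N. B N \<in> sets (M N) \<and> E N \<subseteq> B N) \<and> (\<lambda>N. measure (M N) (B N)) \<longlonglongrightarrow> 0)"

end

theory Submission
  imports Defs
begin


lemma min_cover:
  assumes "prob_space M" "E \<subseteq> space M"
  shows "\<exists>B\<in>sets M. E \<subseteq> B \<and> (\<forall>S\<in>sets M. E \<subseteq> S \<longrightarrow> measure M B \<le> measure M S)"
proof -
  interpret prob_space M by fact
  define C where "C = {S\<in>sets M. E \<subseteq> S}"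
  define m where "m = (INF S\<in>C. measure M S)"
  have Cne: "C \<noteq> {}" using assms(2) by (auto simp: C_def)
  have bdd: "bdd_below ((\<lambda>S. measure M S) ` C)" by (intro bdd_belowI[of _ 0]) auto
  have "\<forall>k::nat. \<exists>S\<in>C. measure M S < m + 1/(real k+1)"
  proof
    fix k :: nat
    have "m < m + 1/(real k+1)" by simp
    then show "\<exists>S\<in>C. measure M S < m + 1/(real k+1)"
      using cINF_less_iff[OF Cne bdd] unfolding m_def by blast
  qed
  then obtain S where S: "\<And>k. S k \<in> C" "\<And>k. measure M (S k) < m + 1/(real k+1)" by metis
  define B where "B = (\<Inter>k. S k)"
  have Bs: "B \<in> sets M" using S(1) unfolding B_def C_def by auto
  have EB: "E \<subseteq> B" using S(1) unfolding B_def C_def by auto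
  have "measure M B \<le> m"
  proof (rule field_le_epsilon)
    fix e :: real assume "0 < e"
    obtain k :: nat where k0: "inverse (real (Suc k)) < e"
      using reals_Archimedean[OF \<open>0 < e\<close>] by blast
    have k: "1/(real k+1) < e" using k0 by (simp add: inverse_eq_divide add.commute)
    have "measure M B \<le> measure M (S k)"
      using S(1) Bs unfolding B_def C_def by (intro finite_measure_mono) auto
    then show "measure M B \<le> m + e" using S(2)[of k] k by linarith
  qed
  moreover have "\<forall>T\<in>sets M. E \<subseteq> T \<longrightarrow> m \<le> measure M T"
    unfolding m_def C_def using bdd by (auto intro!: cINF_lower simp: C_def)
  ultimately show ?thesis using Bs EB by (meson order_trans)
qed

lemma outer_from_eps:
  assumes prob: "\<And>N. prob_space (M N)" and sub: "\<And>N. E N \<subseteq> space (M N)"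
    and eps: "\<And>\<eta>. \<eta> > 0 \<Longrightarrow> \<exists>B. (\<forall>N. B N \<in> sets (M N)) \<and>
       (\<forall>\<^sub>F N in sequentially. E N \<subseteq> B N \<and> measure (M N) (B N) < \<eta>)"
  shows "outer_prob_to_zero M E"
proof -
  have "\<forall>N. \<exists>B\<in>sets (M N). E N \<subseteq> B \<and> (\<forall>S\<in>sets (M N). E N \<subseteq> S \<longrightarrow> measure (M N) B \<le> measure (M N) S)"
    using min_cover[OF prob sub] by blast
  then obtain B where B: "\<And>N. B N \<in> sets (M N)" "\<And>N. E N \<subseteq> B N"
    "\<And>N S. S \<in> sets (M N) \<Longrightarrow> E N \<subseteq> S \<Longrightarrow> measure (M N) (B N) \<le> measure (M N) S"
    by metis
  have "(\<lambda>N. measure (M N) (B N)) \<longlonglongrightarrow> 0"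
  proof (rule order_tendstoI)
    fix a :: real assume "a < 0"
    then show "\<forall>\<^sub>F N in sequentially. a < measure (M N) (B N)"
      by (intro always_eventually allI less_le_trans[OF _ measure_nonneg])
  next
    fix a :: real assume "0 < a"
    from eps[OF this] obtain B' where B': "\<And>N. B' N \<in> sets (M N)"
      "\<forall>\<^sub>F N in sequentially. E N \<subseteq> B' N \<and> measure (M N) (B' N) < a" by blast
    from B'(2) show "\<forall>\<^sub>F N in sequentially. measure (M N) (B N) < a"
    proof eventually_elim
      case (elim N)
      then have "measure (M N) (B N) \<le> measure (M N) (B' N)" using B(3) B'(1) by blast
      then show ?case using elim by linarith
    qed
  qed
  then show ?thesis unfolding outer_prob_to_zero_def using B by blast
qed

lemma wc_bound:
  assumes prob: "\<And>N. prob_space (M N)" and Ym: "\<And>N. Y N \<in> borel_measurable (M N)"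
    and z: "real_distribution \<zeta>" and wc: "weak_conv_m (\<lambda>N. distr (M N) borel (Y N)) \<zeta>"
    and fc: "\<And>x. isCont f x" and f0: "\<And>x. 0 \<le> f x" and f1: "\<And>x. f x \<le> 1"
    and Sf: "\<And>x. x \<in> S \<Longrightarrow> 1 \<le> f x" and Sm: "S \<in> sets borel"
    and lt: "integral\<^sup>L \<zeta> f < \<eta>"
  shows "\<forall>\<^sub>F N in sequentially. measure (M N) {\<omega>\<in>space (M N). Y N \<omega> \<in> S} < \<eta>"
proof -
  have rd: "real_distribution (distr (M N) borel (Y N))" for N
    using prob_space.real_distribution_distr[OF prob Ym] by simp
  have fm: "f \<in> borel_measurable borel"
    using fc by (auto intro!: borel_measurable_continuous_onI continuous_at_imp_continuous_on)
  have "(\<lambda>N. integral\<^sup>L (distr (M N) borel (Y N)) f) \<longlonglongrightarrow> integral\<^sup>L \<zeta> f"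
    by (rule weak_conv_imp_integral_bdd_continuous_conv[OF rd z wc fc, of 1]) (use f0 f1 in auto)
  then have ev: "\<forall>\<^sub>F N in sequentially. integral\<^sup>L (distr (M N) borel (Y N)) f < \<eta>"
    using lt order_tendstoD(2) by blast
  show ?thesis using ev
  proof eventually_elim
    case (elim N)
    interpret D: real_distribution "distr (M N) borel (Y N)" by (rule rd)
    have "measure (M N) {\<omega>\<in>space (M N). Y N \<omega> \<in> S} = measure (distr (M N) borel (Y N)) S"
      using Ym Sm by (subst measure_distr) (auto simp: vimage_def Int_def conj_commute)
    also have "\<dots> = integral\<^sup>L (distr (M N) borel (Y N)) (indicator S)" by simp
    also have "\<dots> \<le> integral\<^sup>L (distr (M N) borel (Y N)) f"
      using Sm fm f0 Sf f1
      by (intro integral_mono D.integrable_const_bound[where B=1]) (auto simp: indicator_def)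
    finally show ?case using elim by linarith
  qed
qed

lemma wc_small:
  assumes prob: "\<And>N. prob_space (M N)" and Ym: "\<And>N. Y N \<in> borel_measurable (M N)"
    and z: "real_distribution \<zeta>" and wc: "weak_conv_m (\<lambda>N. distr (M N) borel (Y N)) \<zeta>"
    and pos: "measure \<zeta> {0<..} = 1" and eta: "\<eta> > 0"
  shows "\<exists>t>0. \<forall>\<^sub>F N in sequentially. measure (M N) {\<omega>\<in>space (M N). Y N \<omega> \<in> {..t}} < \<eta>"
proof -
  interpret Z: real_distribution \<zeta> by (rule z)
  have "cdf \<zeta> 0 = measure \<zeta> {..0}" by (simp add: cdf_def)
  also have "{..0::real} = space \<zeta> - {0<..}" by auto
  also have "measure \<zeta> \<dots> = 0" using pos by (subst Z.prob_compl) auto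
  finally have c0: "cdf \<zeta> 0 = 0" .
  have "((cdf \<zeta>) \<longlongrightarrow> cdf \<zeta> 0) (at_right 0)"
    using Z.cdf_is_right_cont[of 0] by (simp add: continuous_within)
  then have "\<forall>\<^sub>F x in at_right 0. cdf \<zeta> x < \<eta>" using eta c0 order_tendstoD(2) by fastforce
  then obtain b where b: "b > 0" "\<And>y. 0 < y \<Longrightarrow> y < b \<Longrightarrow> cdf \<zeta> y < \<eta>"
    unfolding eventually_at_right_field by blast
  define t where "t = b / 4"
  have t: "t > 0" "cdf \<zeta> (2*t) < \<eta>" using b unfolding t_def by auto
  define f where "f = (\<lambda>y::real. min 1 (max 0 (2 - y / t)))"
  have fc: "isCont f x" for x unfolding f_def using t(1) by (intro continuous_intros) auto
  have "integral\<^sup>L \<zeta> f \<le> integral\<^sup>L \<zeta> (indicator {..2*t})"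
  proof (intro integral_mono Z.integrable_const_bound[where B=1])
    show "f \<in> borel_measurable \<zeta>" 
      using fc by (intro Z.measurable_finite_borel borel_measurable_continuous_onI continuous_at_imp_continuous_on) auto
    show "f x \<le> indicator {..2*t} x" for x
      using t by (auto simp: f_def indicator_def field_simps)
  qed (auto simp: f_def indicator_def)
  also have "\<dots> = cdf \<zeta> (2*t)" by (simp add: cdf_def)
  finally have "integral\<^sup>L \<zeta> f < \<eta>" using t by linarith
  then have "\<forall>\<^sub>F N in sequentially. measure (M N) {\<omega>\<in>space (M N). Y N \<omega> \<in> {..t}} < \<eta>"
    by (intro wc_bound[OF prob Ym z wc fc]) (use t in \<open>auto simp: f_def field_simps\<close>)
  then show ?thesis using t by blast
qed

lemma wc_tight:
  assumes prob: "\<And>N. prob_space (M N)" and Ym: "\<And>N. Y N \<in> borel_measurable (M N)"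
    and z: "real_distribution \<zeta>" and wc: "weak_conv_m (\<lambda>N. distr (M N) borel (Y N)) \<zeta>"
    and eta: "\<eta> > 0"
  shows "\<exists>s. \<forall>\<^sub>F N in sequentially. measure (M N) {\<omega>\<in>space (M N). Y N \<omega> \<in> {s..}} < \<eta>"
proof -
  interpret Z: real_distribution \<zeta> by (rule z)
  have "\<forall>\<^sub>F x in at_top. cdf \<zeta> x > 1 - \<eta>"
    using Z.cdf_lim_at_top_prob eta order_tendstoD(1) by fastforce
  then obtain a where a: "cdf \<zeta> a > 1 - \<eta>"
    unfolding eventually_at_top_linorder by auto
  define s where "s = a + 1"
  define f where "f = (\<lambda>y::real. min 1 (max 0 (y - a)))"
  have fc: "isCont f x" for x unfolding f_def by (intro continuous_intros) 
  have "integral\<^sup>L \<zeta> f \<le> integral\<^sup>L \<zeta> (indicator {a<..})"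
  proof (intro integral_mono Z.integrable_const_bound[where B=1])
    show "f \<in> borel_measurable \<zeta>" 
      using fc by (intro Z.measurable_finite_borel borel_measurable_continuous_onI continuous_at_imp_continuous_on) auto
    show "f x \<le> indicator {a<..} x" for x
      by (auto simp: f_def indicator_def field_simps)
  qed (auto simp: f_def indicator_def)
  also have "\<dots> = measure \<zeta> {a<..}" by simp
  also have "{a<..} = space \<zeta> - {..a}" by auto
  also have "measure \<zeta> \<dots> = 1 - cdf \<zeta> a" by (subst Z.prob_compl) (auto simp: cdf_def)
  finally have "integral\<^sup>L \<zeta> f < \<eta>" using a by linarith
  then have "\<forall>\<^sub>F N in sequentially. measure (M N) {\<omega>\<in>space (M N). Y N \<omega> \<in> {s..}} < \<eta>"
    by (intro wc_bound[OF prob Ym z wc fc]) (auto simp: f_def s_def)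
  then show ?thesis by blast
qed


lemma gmc_meas:
  assumes prob: "prob_space (M N)"
    and meas: "(\<lambda>(\<omega>, x). X N \<omega> x) \<in> borel_measurable (M N \<Otimes>\<^sub>M borel)"
    and A: "A \<in> sets borel"
  shows "gmc M X N \<gamma> A \<in> borel_measurable (M N)"
proof -
  interpret P: prob_space "M N" by (rule prob)
  have sw: "(\<lambda>(x, \<omega>). X N \<omega> x) \<in> borel_measurable (borel \<Otimes>\<^sub>M M N)"
    using measurable_pair_swap[OF meas] by (simp add: case_prod_beta')
  have m1: "(\<lambda>(x, \<omega>). exp (\<gamma> * X N \<omega> x)) \<in> borel_measurable (borel \<Otimes>\<^sub>M M N)"
    using sw by (simp add: case_prod_beta' measurable_compose[OF _ borel_measurable_exp])
  have D: "(\<lambda>x. \<integral>\<omega>'. exp (\<gamma> * X N \<omega>' x) \<partial>M N) \<in> borel_measurable borel"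
    using P.borel_measurable_lebesgue_integral[of "\<lambda>x \<omega>. exp (\<gamma> * X N \<omega> x)" borel] m1
    by (simp add: case_prod_beta')
  have meas': "(\<lambda>(\<omega>, x). X N \<omega> x) \<in> borel_measurable (M N \<Otimes>\<^sub>M lborel)"
  proof -
    have ss: "sets (M N \<Otimes>\<^sub>M lborel) = sets (M N \<Otimes>\<^sub>M borel)"
      by (intro sets_pair_measure_cong) auto
    show ?thesis using meas unfolding measurable_cong_sets[OF ss refl] .
  qed
  have D': "(\<lambda>p. \<integral>\<omega>'. exp (\<gamma> * X N \<omega>' (snd p)) \<partial>M N) \<in> borel_measurable (M N \<Otimes>\<^sub>M lborel)"
  proof -
    have D0: "(\<lambda>x. \<integral>\<omega>'. exp (\<gamma> * X N \<omega>' x) \<partial>M N) \<in> borel_measurable lborel" using D by simp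
    show ?thesis using measurable_compose[OF measurable_snd[of "M N" lborel] D0] by (simp add: comp_def)
  qed
  have "(\<lambda>(\<omega>, x). indicator A x *\<^sub>R (exp (\<gamma> * X N \<omega> x) / (\<integral>\<omega>'. exp (\<gamma> * X N \<omega>' x) \<partial>M N)))
      \<in> borel_measurable (M N \<Otimes>\<^sub>M lborel)"
  proof -
    have i: "(\<lambda>p. indicator A (snd p) :: real) \<in> borel_measurable (M N \<Otimes>\<^sub>M lborel)"
      using A by measurable
    have e: "(\<lambda>p. exp (\<gamma> * X N (fst p) (snd p))) \<in> borel_measurable (M N \<Otimes>\<^sub>M lborel)"
      using meas' by (simp add: case_prod_beta')
    show ?thesis using i e D' by (simp add: case_prod_beta')
  qed
  then show ?thesis unfolding gmc_def
    using lborel.borel_measurable_lebesgue_integral[of "\<lambda>\<omega> x. indicator A x *\<^sub>R (exp (\<gamma> * X N \<omega> x) / (\<integral>\<omega>'. exp (\<gamma> * X N \<omega>' x) \<partial>M N))" "M N"]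
    by (simp add: set_lebesgue_integral_def)
qed

lemma key_ineq:
  fixes u l P Q C R' g g' a :: real
  assumes C: "0 < C" and Q: "0 < Q" and P: "P \<ge> (1/C) * exp (- g\<^sup>2 / 2 * l)"
    and Qb: "Q \<le> R' * exp (- g'\<^sup>2 / 2 * l)" and u: "u \<le> a * (-l)" and gg: "g' < g"
  shows "exp (g*u) / P \<le> R' * C * exp (((g\<^sup>2 - g'\<^sup>2)/2 - (g - g')*a) * l) * (exp (g'*u) / Q)"
proof -
  have Pp: "P > 0" using P C by (smt (verit) exp_gt_zero divide_pos_pos mult_pos_pos)
  have i1: "1 / P \<le> C * exp (g\<^sup>2 / 2 * l)"
  proof -
    have "1 / P \<le> 1 / ((1/C) * exp (- g\<^sup>2 / 2 * l))"
      using P C Pp by (intro divide_left_mono) auto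
    also have "\<dots> = C * exp (g\<^sup>2 / 2 * l)" by (simp add: exp_minus field_simps)
    finally show ?thesis .
  qed
  have i2: "exp (g*u) \<le> exp (g'*u) * exp ((g - g') * (a * (-l)))"
  proof -
    have "(g - g') * u \<le> (g - g') * (a * (-l))" using gg u by (intro mult_left_mono) auto
    then have "exp (g*u) \<le> exp (g'*u + (g - g') * (a * (-l)))" by (simp add: algebra_simps)
    then show ?thesis by (simp only: exp_add)
  qed
  have i3: "1 \<le> R' * exp (- g'\<^sup>2 / 2 * l) / Q" using Qb Q by simp
  have "exp (g*u) / P = exp (g*u) * (1/P)" by simp
  also have "\<dots> \<le> (exp (g'*u) * exp ((g - g') * (a * (-l)))) * (C * exp (g\<^sup>2 / 2 * l))"
    using i1 i2 Pp by (intro mult_mono) auto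
  also have "\<dots> \<le> (exp (g'*u) * exp ((g - g') * (a * (-l)))) * (C * exp (g\<^sup>2 / 2 * l)) * (R' * exp (- g'\<^sup>2 / 2 * l) / Q)"
    using mult_left_mono[OF i3, of "(exp (g'*u) * exp ((g - g') * (a * (-l)))) * (C * exp (g\<^sup>2 / 2 * l))"] C by simp
  also have "\<dots> = R' * C * (exp ((g - g') * (a * (-l))) * exp (g\<^sup>2 / 2 * l) * exp (- g'\<^sup>2 / 2 * l)) * (exp (g'*u) / Q)"
    by (simp add: field_simps)
  also have "exp ((g - g') * (a * (-l))) * exp (g\<^sup>2 / 2 * l) * exp (- g'\<^sup>2 / 2 * l) = exp (((g\<^sup>2 - g'\<^sup>2)/2 - (g - g')*a) * l)"
    by (simp add: exp_add[symmetric] algebra_simps diff_divide_distrib)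
  finally show ?thesis .
qed

lemma D_meas:
  fixes X :: "nat \<Rightarrow> 'w \<Rightarrow> 'a::euclidean_space \<Rightarrow> real" and \<gamma> :: real
  assumes prob: "prob_space (M N)"
    and meas: "(\<lambda>(\<omega>, x). X N \<omega> x) \<in> borel_measurable (M N \<Otimes>\<^sub>M borel)"
  shows "(\<lambda>x. \<integral>\<omega>'. exp (\<gamma> * X N \<omega>' x) \<partial>M N) \<in> borel_measurable borel"
proof -
  interpret P: prob_space "M N" by (rule prob)
  have sw: "(\<lambda>(x, \<omega>). X N \<omega> x) \<in> borel_measurable (borel \<Otimes>\<^sub>M M N)"
    using measurable_pair_swap[OF meas] by (simp add: case_prod_beta')
  have sw'[measurable]: "(\<lambda>x. X N (snd x) (fst x)) \<in> borel_measurable (borel \<Otimes>\<^sub>M M N)"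
    using sw by (simp add: case_prod_beta')
  have m1': "(\<lambda>x. exp (\<gamma> * X N (snd x) (fst x))) \<in> borel_measurable (borel \<Otimes>\<^sub>M M N)"
  proof -
    have g: "(\<lambda>y::real. exp (\<gamma> * y)) \<in> borel_measurable borel"
      by (intro borel_measurable_continuous_onI continuous_intros)
    show ?thesis using measurable_compose[OF sw' g] by simp
  qed
  have m1: "(\<lambda>(x, \<omega>). exp (\<gamma> * X N \<omega> x)) \<in> borel_measurable (borel \<Otimes>\<^sub>M M N)"
    using m1' by (simp add: case_prod_beta')
  show ?thesis
    using P.borel_measurable_lebesgue_integral[of "\<lambda>x \<omega>. exp (\<gamma> * X N \<omega> x)" borel] m1
    by (simp add: case_prod_beta')
qed

lemma X_meas:
  assumes meas: "(\<lambda>(\<omega>, x). X N \<omega> x) \<in> borel_measurable (M N \<Otimes>\<^sub>M borel)"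
    and w: "\<omega> \<in> space (M N)"
  shows "X N \<omega> \<in> borel_measurable borel"
  using measurable_Pair2[OF meas w] by simp

lemma pred_sets:
  assumes "f \<in> borel_measurable M" "S \<in> sets borel"
  shows "{\<omega>\<in>space M. f \<omega> \<in> S} \<in> sets M"
proof -
  have "{\<omega>\<in>space M. f \<omega> \<in> S} = f -` S \<inter> space M" by auto
  then show ?thesis using measurable_sets[OF assms] by simp
qed



theorem corollary3p7:
  fixes \<Omega> :: "'a::euclidean_space set"
    and M :: "nat \<Rightarrow> 'w measure"
    and X :: "nat \<Rightarrow> 'w \<Rightarrow> 'a \<Rightarrow> real"
    and \<epsilon> :: "nat \<Rightarrow> real"
    and g :: "'a \<Rightarrow> 'a \<Rightarrow> real"
  assumes dom: "open \<Omega>" "bounded \<Omega>" "\<Omega> \<noteq> {}" "simply_connected \<Omega>" "smooth_boundary \<Omega>"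
    and prob: "\<And>N. prob_space (M N)"
    and meas: "\<And>N. (\<lambda>(\<omega>, x). X N \<omega> x) \<in> borel_measurable (M N \<Otimes>\<^sub>M borel)"
    and integ: "\<And>N \<omega>. \<omega> \<in> space (M N) \<Longrightarrow> set_integrable lborel \<Omega> (X N \<omega>)"
    and bdd: "\<And>N \<omega>. \<omega> \<in> space (M N) \<Longrightarrow> \<exists>B. \<forall>x\<in>\<Omega>. X N \<omega> x \<le> B"
    and usc: "\<And>N \<omega>. \<omega> \<in> space (M N) \<Longrightarrow> upper_semicontinuous_on \<Omega> (X N \<omega>)"
    and g_cont: "continuous_on (\<Omega> \<times> \<Omega>) (\<lambda>(x, y). g x y)"
    and g_bdd: "\<exists>B. \<forall>x\<in>\<Omega>. \<forall>y\<in>\<Omega>. g x y \<le> B"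
    and g_L2: "set_integrable (lborel \<Otimes>\<^sub>M lborel) (\<Omega> \<times> \<Omega>) (\<lambda>(x, y). (g x y)\<^sup>2)"
    and gauss: "\<And>f. smooth_on f UNIV \<Longrightarrow> compact (closure {x. f x \<noteq> 0}) \<Longrightarrow> closure {x. f x \<noteq> 0} \<subseteq> \<Omega> \<Longrightarrow>
        weak_conv_m (\<lambda>N. distr (M N) borel (\<lambda>\<omega>. LINT x:\<Omega>|lborel. f x * X N \<omega> x))
          (gaussian_law (LINT x:\<Omega>|lborel. LINT y:\<Omega>|lborel.
              f x * f y * (ln (1 / dist x y) + g x y)))"
    and E_pos: "\<And>N. \<epsilon> N > 0"
    and E_lim: "\<epsilon> \<longlonglongrightarrow> 0"
    and E_upper: "\<And>\<gamma>. \<gamma> > 0 \<Longrightarrow> \<exists>R. \<forall>N. \<forall>x\<in>\<Omega>.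
        integrable (M N) (\<lambda>\<omega>. exp (\<gamma> * X N \<omega> x)) \<and>
        (\<integral>\<omega>. exp (\<gamma> * X N \<omega> x) \<partial>M N) \<le> R * \<epsilon> N powr (- \<gamma>\<^sup>2 / 2)"
    and E_lower: "\<And>\<gamma> A. \<gamma> > 0 \<Longrightarrow> compact A \<Longrightarrow> A \<subseteq> \<Omega> \<Longrightarrow> \<exists>C>0. \<forall>N. \<forall>x\<in>A.
        (\<integral>\<omega>. exp (\<gamma> * X N \<omega> x) \<partial>M N) \<ge> (1 / C) * \<epsilon> N powr (- \<gamma>\<^sup>2 / 2)"
    and M_cond: "\<And>\<gamma> A. 0 < \<gamma> \<Longrightarrow> \<gamma> < sqrt (2 * DIM('a)) \<Longrightarrow> A \<in> sets borel \<Longrightarrow>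
        A \<subseteq> \<Omega> \<Longrightarrow> emeasure lborel A > 0 \<Longrightarrow>
        \<exists>\<zeta>::real measure. prob_space \<zeta> \<and> sets \<zeta> = sets borel \<and>
          measure \<zeta> {0<..} = 1 \<and>
          weak_conv_m (\<lambda>N. distr (M N) borel (gmc M X N \<gamma> A)) \<zeta>"
    and T_cond: "\<And>\<alpha>. \<alpha> > sqrt (2 * DIM('a)) \<Longrightarrow>
        outer_prob_to_zero M (\<lambda>N. {\<omega>\<in>space (M N). thick_points X \<epsilon> \<Omega> N \<alpha> \<omega> \<noteq> {}})"
  shows "\<forall>\<delta>>0. outer_prob_to_zero M (\<lambda>N. {\<omega>\<in>space (M N).
            \<bar>(SUP x\<in>\<Omega>. X N \<omega> x) / ln (1 / \<epsilon> N) - sqrt (2 * DIM('a))\<bar> > \<delta>})"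
  proof (intro allI impI)
  fix \<delta> :: real assume \<delta>: "\<delta> > 0"
  define gs where "gs = sqrt (2 * DIM('a))"
  have gs_pos: "gs > 0" unfolding gs_def by simp
  show "outer_prob_to_zero M (\<lambda>N. {\<omega>\<in>space (M N).
            \<bar>(SUP x\<in>\<Omega>. X N \<omega> x) / ln (1 / \<epsilon> N) - sqrt (2 * DIM('a))\<bar> > \<delta>})"
    unfolding gs_def[symmetric]
  proof (rule outer_from_eps[OF prob])
    fix \<eta> :: real assume \<eta>: "\<eta> > 0"
    have "gs + \<delta> > sqrt (2 * DIM('a))" using \<delta> unfolding gs_def by simp
    from T_cond[OF this] obtain BT where BT: "\<And>N. BT N \<in> sets (M N)"
      "\<And>N. {\<omega>\<in>space (M N). thick_points X \<epsilon> \<Omega> N (gs + \<delta>) \<omega> \<noteq> {}} \<subseteq> BT N"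
      "(\<lambda>N. measure (M N) (BT N)) \<longlonglongrightarrow> 0"
      unfolding outer_prob_to_zero_def by blast
    have ev5: "\<forall>\<^sub>F N in sequentially. measure (M N) (BT N) < \<eta>/3"
      using order_tendstoD(2)[OF BT(3), of "\<eta>/3"] \<eta> by simp
    define a where "a = gs - \<delta>"
    define g1 where "g1 = (max a 0 + gs) / 2"
    define g2 where "g2 = (g1 + gs) / 2"
    have mx: "a \<le> max a 0" "0 \<le> max a 0" by auto
    have ags: "a < gs" using \<delta> unfolding a_def by simp
    have mxs: "max a 0 < gs" using ags gs_pos by simp
    have g1e: "2 * g1 = max a 0 + gs" unfolding g1_def by simp
    have g2e: "2 * g2 = g1 + gs" unfolding g2_def by simp
    have g1p: "0 < g1" using g1e mx gs_pos by linarith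
    have g1s: "g1 < gs" using g1e mxs by linarith
    have g12: "g1 < g2" using g2e g1s by linarith
    have g2s: "g2 < gs" using g2e g1s by linarith
    have ag1: "a < g1" using g1e mx ags by linarith
    have g2p: "0 < g2" using g1p g12 by simp
    define e where "e = (g2\<^sup>2 - g1\<^sup>2)/2 - (g2 - g1)*a"
    have e_pos: "e > 0"
    proof -
      have "e = (g2 - g1) * ((g2 + g1)/2 - a)" unfolding e_def by (simp add: power2_eq_square algebra_simps)
      moreover have "(g2 + g1)/2 - a > 0"
      proof -
        have "g2 + g1 > 2 * a" using g12 ag1 by linarith
        then show ?thesis by simp
      qed
      ultimately show ?thesis using g12 by simp
    qed
    obtain c where c: "c \<in> \<Omega>" using dom(3) by blast
    obtain r where r: "r > 0" "cball c r \<subseteq> \<Omega>" using open_contains_cball dom(1) c by blast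
    define A where "A = cball c r"
    have A_sets: "A \<in> sets borel" and A_comp: "compact A" and A_sub: "A \<subseteq> \<Omega>"
      using r unfolding A_def by auto
    have A_fin: "emeasure lborel A < \<infinity>" unfolding A_def by (rule emeasure_lborel_cball_finite)
    have A_pos: "emeasure lborel A > 0"
    proof -
      have "emeasure lborel A = ennreal (measure lborel A)"
        using A_fin by (intro emeasure_eq_ennreal_measure) auto
      then show ?thesis using content_cball_pos[OF r(1), of c] unfolding A_def by simp
    qed
    have A_lb: "A \<in> sets lborel" using A_sets by simp
    obtain \<zeta>2 where z2: "prob_space \<zeta>2" "sets \<zeta>2 = sets borel" "measure \<zeta>2 {0<..} = 1"
        "weak_conv_m (\<lambda>N. distr (M N) borel (gmc M X N g2 A)) \<zeta>2"
      using M_cond[OF g2p _ A_sets A_sub A_pos] g2s unfolding gs_def by blast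
    obtain \<zeta>1 where z1: "prob_space \<zeta>1" "sets \<zeta>1 = sets borel"
        "weak_conv_m (\<lambda>N. distr (M N) borel (gmc M X N g1 A)) \<zeta>1"
      using M_cond[OF g1p _ A_sets A_sub A_pos] g12 g2s unfolding gs_def by auto
    have rd2: "real_distribution \<zeta>2" using z2 unfolding real_distribution_def real_distribution_axioms_def by simp
    have rd1: "real_distribution \<zeta>1" using z1 unfolding real_distribution_def real_distribution_axioms_def by simp
    have Ym: "\<And>N. gmc M X N g2 A \<in> borel_measurable (M N)"
      by (rule gmc_meas[where X=X and M=M, OF prob meas A_sets])
    have Zm: "\<And>N. gmc M X N g1 A \<in> borel_measurable (M N)"
      by (rule gmc_meas[where X=X and M=M, OF prob meas A_sets])
    have "\<eta>/3 > 0" using \<eta> by simp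
    from wc_small[OF prob Ym rd2 z2(4) z2(3) this] obtain t where t: "t > 0"
      "\<forall>\<^sub>F N in sequentially. measure (M N) {\<omega>\<in>space (M N). gmc M X N g2 A \<omega> \<in> {..t}} < \<eta>/3"
      by blast
    from wc_tight[OF prob Zm rd1 z1(3) \<open>\<eta>/3 > 0\<close>] obtain s where s:
      "\<forall>\<^sub>F N in sequentially. measure (M N) {\<omega>\<in>space (M N). gmc M X N g1 A \<omega> \<in> {s..}} < \<eta>/3"
      by blast
    obtain C2 where C2: "C2 > 0" "\<And>N x. x \<in> A \<Longrightarrow>
        (\<integral>\<omega>. exp (g2 * X N \<omega> x) \<partial>M N) \<ge> (1 / C2) * \<epsilon> N powr (- g2\<^sup>2 / 2)"
      using E_lower[OF g2p A_comp A_sub] by blast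
    obtain C1 where C1: "C1 > 0" "\<And>N x. x \<in> A \<Longrightarrow>
        (\<integral>\<omega>. exp (g1 * X N \<omega> x) \<partial>M N) \<ge> (1 / C1) * \<epsilon> N powr (- g1\<^sup>2 / 2)"
      using E_lower[OF g1p A_comp A_sub] by blast
    obtain R where R: "\<And>N x. x \<in> \<Omega> \<Longrightarrow>
        (\<integral>\<omega>. exp (g1 * X N \<omega> x) \<partial>M N) \<le> R * \<epsilon> N powr (- g1\<^sup>2 / 2)"
      using E_upper[OF g1p] by blast
    define K where "K N = (\<bar>R\<bar> + 1) * C2 * exp (e * ln (\<epsilon> N))" for N
    have K_pos: "K N > 0" for N unfolding K_def using C2 by (simp add: add_pos_nonneg)
    have "(\<lambda>N. \<epsilon> N powr e) \<longlonglongrightarrow> 0"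
      by (rule tendsto_zero_powrI[OF E_lim tendsto_const]) (use E_pos e_pos in \<open>auto intro!: always_eventually less_imp_le\<close>)
    then have "(\<lambda>N. (\<bar>R\<bar> + 1) * C2 * \<epsilon> N powr e) \<longlonglongrightarrow> (\<bar>R\<bar> + 1) * C2 * 0"
      by (intro tendsto_mult tendsto_const)
    moreover have "(\<lambda>N. (\<bar>R\<bar> + 1) * C2 * \<epsilon> N powr e) = K"
    proof -
      have enz: "\<epsilon> N \<noteq> 0" for N using E_pos[of N] by linarith
      show ?thesis unfolding K_def powr_def fun_eq_iff using enz by simp
    qed
    ultimately have K_lim: "K \<longlonglongrightarrow> 0" by simp
    have "t / (\<bar>s\<bar> + 1) > 0" using t(1) by (simp add: add_pos_nonneg)
    then have ev2: "\<forall>\<^sub>F N in sequentially. K N < t / (\<bar>s\<bar> + 1)"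
      using K_lim order_tendstoD(2) by blast
    have ev1: "\<forall>\<^sub>F N in sequentially. \<epsilon> N < 1"
      using E_lim order_tendstoD(2) by fastforce
    define B where "B N = {\<omega>\<in>space (M N). gmc M X N g2 A \<omega> \<in> {..t}} \<union>
        {\<omega>\<in>space (M N). gmc M X N g1 A \<omega> \<in> {s..}} \<union> BT N" for N
    have B_sets: "B N \<in> sets (M N)" for N
      unfolding B_def using pred_sets[OF Ym, of "{..t}"] pred_sets[OF Zm, of "{s..}"] BT(1)
      by auto
    have key: "gmc M X N g2 A \<omega> \<le> K N * gmc M X N g1 A \<omega>"
      if w: "\<omega> \<in> space (M N)" and eN: "\<epsilon> N < 1" and Xb: "\<And>x. x \<in> \<Omega> \<Longrightarrow> X N \<omega> x \<le> a * ln (1 / \<epsilon> N)"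
      for N \<omega>
    proof -
      define D1 where "D1 x = (\<integral>\<omega>'. exp (g1 * X N \<omega>' x) \<partial>M N)" for x
      define D2 where "D2 x = (\<integral>\<omega>'. exp (g2 * X N \<omega>' x) \<partial>M N)" for x
      define l where "l = ln (\<epsilon> N)"
      have lL: "ln (1 / \<epsilon> N) = - l" unfolding l_def using E_pos[of N] by (simp add: ln_div)
      have D1pos: "D1 x > 0" if "x \<in> A" for x
      proof -
        have "(1 / C1) * \<epsilon> N powr (- g1\<^sup>2 / 2) > 0" using C1(1) E_pos[of N] by simp
        then show ?thesis using C1(2)[OF that, of N] unfolding D1_def by linarith
      qed
      obtain Bw where Bw: "\<forall>x\<in>\<Omega>. X N \<omega> x \<le> Bw" using bdd[OF w] by blast
      have Xm: "X N \<omega> \<in> borel_measurable borel" by (rule X_meas[where X=X and N=N and M=M, OF meas[of N] w])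
      have D1m: "D1 \<in> borel_measurable borel" unfolding D1_def by (rule D_meas[where X=X and N=N and M=M, OF prob[of N] meas[of N]])
      have D2m: "D2 \<in> borel_measurable borel" unfolding D2_def by (rule D_meas[where X=X and N=N and M=M, OF prob[of N] meas[of N]])
      have f1m: "(\<lambda>x. exp (g1 * X N \<omega> x) / D1 x) \<in> borel_measurable lborel"
        using Xm D1m by simp
      have int1: "integrable lborel (\<lambda>x. indicator A x *\<^sub>R (exp (g1 * X N \<omega> x) / D1 x))"
      proof (rule integrableI_bounded_set_indicator[OF A_lb f1m A_fin])
        show "AE x in lborel. x \<in> A \<longrightarrow> norm (exp (g1 * X N \<omega> x) / D1 x) \<le> exp (g1 * Bw) / ((1 / C1) * \<epsilon> N powr (- g1\<^sup>2 / 2))"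
        proof (intro AE_I2 impI)
          fix x assume x: "x \<in> A"
          have h1: "exp (g1 * X N \<omega> x) \<le> exp (g1 * Bw)"
            using Bw x A_sub g1p by (auto intro: mult_left_mono)
          have h2: "(1 / C1) * \<epsilon> N powr (- g1\<^sup>2 / 2) > 0" using C1(1) E_pos[of N] by simp
          have h3: "D1 x \<ge> (1 / C1) * \<epsilon> N powr (- g1\<^sup>2 / 2)" using C1(2)[OF x] unfolding D1_def by simp
          have "norm (exp (g1 * X N \<omega> x) / D1 x) = exp (g1 * X N \<omega> x) / D1 x"
            using D1pos[OF x] by simp
          also have "\<dots> \<le> exp (g1 * Bw) / ((1 / C1) * \<epsilon> N powr (- g1\<^sup>2 / 2))"
            by (rule frac_le[OF _ h1 h2 h3]) simp
          finally show "norm (exp (g1 * X N \<omega> x) / D1 x) \<le> exp (g1 * Bw) / ((1 / C1) * \<epsilon> N powr (- g1\<^sup>2 / 2))" .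
        qed
      qed
      have pw: "indicator A x *\<^sub>R (exp (g2 * X N \<omega> x) / D2 x) \<le> K N * (indicator A x *\<^sub>R (exp (g1 * X N \<omega> x) / D1 x))" for x
      proof (cases "x \<in> A")
        case True
        have P: "D2 x \<ge> (1/C2) * exp (- g2\<^sup>2 / 2 * l)"
          using C2(2)[OF True, of N] E_pos[of N] unfolding D2_def l_def by (simp add: powr_def)
        have Q: "D1 x \<le> (\<bar>R\<bar> + 1) * exp (- g1\<^sup>2 / 2 * l)"
        proof -
          have "D1 x \<le> R * \<epsilon> N powr (- g1\<^sup>2 / 2)" using R[of x N] True A_sub unfolding D1_def by auto
          also have "\<dots> \<le> (\<bar>R\<bar> + 1) * \<epsilon> N powr (- g1\<^sup>2 / 2)" by (intro mult_right_mono) auto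
          finally show ?thesis using E_pos[of N] unfolding l_def by (simp add: powr_def)
        qed
        have u: "X N \<omega> x \<le> a * (- l)" using Xb[of x] True A_sub lL by auto
        have "exp (g2 * X N \<omega> x) / D2 x \<le> (\<bar>R\<bar> + 1) * C2 * exp (((g2\<^sup>2 - g1\<^sup>2)/2 - (g2 - g1)*a) * l) * (exp (g1 * X N \<omega> x) / D1 x)"
          by (rule key_ineq[OF C2(1) D1pos[OF True] P Q u g12])
        then show ?thesis using True unfolding K_def e_def l_def by simp
      qed simp
      have "gmc M X N g2 A \<omega> = (\<integral>x. indicator A x *\<^sub>R (exp (g2 * X N \<omega> x) / D2 x) \<partial>lborel)"
        unfolding gmc_def D2_def set_lebesgue_integral_def by simp
      also have "\<dots> \<le> (\<integral>x. K N * (indicator A x *\<^sub>R (exp (g1 * X N \<omega> x) / D1 x)) \<partial>lborel)"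
      proof (rule integral_mono')
        show "integrable lborel (\<lambda>x. K N * (indicator A x *\<^sub>R (exp (g1 * X N \<omega> x) / D1 x)))"
          by (rule integrable_mult_right) (rule int1)
        show "0 \<le> K N * (indicator A x *\<^sub>R (exp (g1 * X N \<omega> x) / D1 x))" for x
          using K_pos[of N] D1pos[of x] by (auto simp: indicator_def)
      qed (rule pw)
      also have "\<dots> = K N * gmc M X N g1 A \<omega>"
        unfolding gmc_def D1_def set_lebesgue_integral_def by (rule integral_mult_right_zero)
      finally show ?thesis .
    qed
    have evE: "\<forall>\<^sub>F N in sequentially. {\<omega>\<in>space (M N). \<bar>(SUP x\<in>\<Omega>. X N \<omega> x) / ln (1 / \<epsilon> N) - gs\<bar> > \<delta>} \<subseteq> B N"
      using ev1 ev2
    proof eventually_elim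
      case (elim N)
      have Lpos: "ln (1 / \<epsilon> N) > 0" using elim(1) E_pos[of N] by simp
      show ?case
      proof
        fix \<omega> assume "\<omega> \<in> {\<omega>\<in>space (M N). \<bar>(SUP x\<in>\<Omega>. X N \<omega> x) / ln (1 / \<epsilon> N) - gs\<bar> > \<delta>}"
        then have w: "\<omega> \<in> space (M N)" and big: "\<bar>(SUP x\<in>\<Omega>. X N \<omega> x) / ln (1 / \<epsilon> N) - gs\<bar> > \<delta>" by auto
        define S where "S = (SUP x\<in>\<Omega>. X N \<omega> x)"
        have bddS: "bdd_above (X N \<omega> ` \<Omega>)" using bdd[OF w] by (auto intro: bdd_aboveI2)
        show "\<omega> \<in> B N"
        proof (cases "S / ln (1 / \<epsilon> N) - gs > \<delta>")
          case True
          then have "S > (gs + \<delta>) * ln (1 / \<epsilon> N)" using Lpos by (simp add: field_simps)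
          then obtain x where x: "x \<in> \<Omega>" "(gs + \<delta>) * ln (1 / \<epsilon> N) < X N \<omega> x"
            unfolding S_def using less_cSUP_iff[OF dom(3) bddS] by blast
          then have "thick_points X \<epsilon> \<Omega> N (gs + \<delta>) \<omega> \<noteq> {}"
            unfolding thick_points_def by force
          then show ?thesis using BT(2)[of N] w unfolding B_def by blast
        next
          case False
          then have "gs - S / ln (1 / \<epsilon> N) > \<delta>" using big unfolding S_def by linarith
          then have Sa: "S < a * ln (1 / \<epsilon> N)" using Lpos unfolding a_def by (simp add: field_simps)
          have Xb: "X N \<omega> x \<le> a * ln (1 / \<epsilon> N)" if "x \<in> \<Omega>" for x
            using cSUP_upper[OF that bddS] Sa unfolding S_def by linarith
          show ?thesis
          proof (cases "gmc M X N g2 A \<omega> \<le> t")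
            case True then show ?thesis using w unfolding B_def by blast
          next
            case False
            have k: "gmc M X N g2 A \<omega> \<le> K N * gmc M X N g1 A \<omega>"
              by (rule key[OF w elim(1) Xb])
            have "t < K N * gmc M X N g1 A \<omega>" using k False by linarith
            also have "\<dots> < t / (\<bar>s\<bar> + 1) * gmc M X N g1 A \<omega>"
            proof -
              have "gmc M X N g1 A \<omega> > 0"
              proof (rule ccontr)
                assume "\<not> gmc M X N g1 A \<omega> > 0"
                then have "K N * gmc M X N g1 A \<omega> \<le> 0" using K_pos[of N] by (simp add: mult_le_0_iff)
                then show False using k False t(1) by linarith
              qed
              then show ?thesis by (rule mult_strict_right_mono[OF elim(2)])
            qed
            also have "\<dots> = t * (gmc M X N g1 A \<omega> / (\<bar>s\<bar> + 1))" by simp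
            finally have "t * 1 < t * (gmc M X N g1 A \<omega> / (\<bar>s\<bar> + 1))" by simp
            then have h1: "1 < gmc M X N g1 A \<omega> / (\<bar>s\<bar> + 1)"
              using t(1) mult_less_cancel_left_pos by blast
            have sp: "0 < \<bar>s\<bar> + 1" by (simp add: add_nonneg_pos)
            have "\<bar>s\<bar> + 1 < gmc M X N g1 A \<omega>" using h1 sp by (simp add: less_divide_eq)
            then have "gmc M X N g1 A \<omega> \<in> {s..}" by simp
            then show ?thesis using w unfolding B_def by blast
          qed
        qed
      qed
    qed
    show "\<exists>B. (\<forall>N. B N \<in> sets (M N)) \<and> (\<forall>\<^sub>F N in sequentially.
        {\<omega>\<in>space (M N). \<bar>(SUP x\<in>\<Omega>. X N \<omega> x) / ln (1 / \<epsilon> N) - gs\<bar> > \<delta>} \<subseteq> B N \<and> measure (M N) (B N) < \<eta>)"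
    proof (intro exI conjI allI)
      show "B N \<in> sets (M N)" for N by (rule B_sets)
      show "\<forall>\<^sub>F N in sequentially.
        {\<omega>\<in>space (M N). \<bar>(SUP x\<in>\<Omega>. X N \<omega> x) / ln (1 / \<epsilon> N) - gs\<bar> > \<delta>} \<subseteq> B N \<and> measure (M N) (B N) < \<eta>"
        using evE t(2) s ev5
      proof eventually_elim
        case (elim N)
        interpret P: prob_space "M N" by (rule prob)
        have "measure (M N) (B N) \<le> measure (M N) ({\<omega>\<in>space (M N). gmc M X N g2 A \<omega> \<in> {..t}} \<union>
            {\<omega>\<in>space (M N). gmc M X N g1 A \<omega> \<in> {s..}}) + measure (M N) (BT N)"
          unfolding B_def using pred_sets[OF Ym, of "{..t}"] pred_sets[OF Zm, of "{s..}"] BT(1)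
          by (intro measure_Un_le) auto
        also have "\<dots> \<le> measure (M N) {\<omega>\<in>space (M N). gmc M X N g2 A \<omega> \<in> {..t}} +
            measure (M N) {\<omega>\<in>space (M N). gmc M X N g1 A \<omega> \<in> {s..}} + measure (M N) (BT N)"
          using pred_sets[OF Ym, of "{..t}"] pred_sets[OF Zm, of "{s..}"]
          by (intro add_right_mono measure_Un_le) auto
        finally show ?case using elim by linarith
      qed
    qed
  qed auto
qed


end
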